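(* Let $X\subset\mathbb R^2$ and let $U$ be a closed disk in the plane whose boundary is not contained in $X$. If $\alpha$ is an essential loop in $X$ whose image lies in $X\cap\operatorname{int}(U)$, then $\alpha$ cannot be freely homotoped in $X$ to a loop whose image is disjoint from $U\cap X$.
   Context: An essential loop is one that is not nullhomotopic in $X$. *)

theory Defs
  imports "HOL-Analysis.Analysis"
begin

definition essential :: "'a::real_normed_vector set \<Rightarrow> (real \<Rightarrow> 'a) \<Rightarrow> bool" where
  "essential X \<alpha> \<longleftrightarrow> path \<alpha> \<and> pathfinish \<alpha> = pathstart \<alpha> \<and> path_image \<alpha> \<subseteq> X \<and>
     \<not> (\<exists>a. homotopic_loops X \<alpha> (\<lambda>t. a))"

end

theory Submission
  imports Defs
begin

lemma AR_sub_punctured_circle: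
  fixes Q :: "(real^2) set"
  assumes "r>0" "p \<in> sphere c r" "Q \<subseteq> sphere c r - {p}" "compact Q" "connected Q" "Q \<noteq> {}"
  shows "AR Q"
proof -
  have "(sphere c r - {p}) homeomorphic {x::real^2. axis 1 1 \<bullet> x = 0}"
    by (rule homeomorphic_punctured_sphere_hyperplane) (use assms in \<open>auto simp: axis_eq_0_iff\<close>)
  also have "... homeomorphic (UNIV::real set)"
    by (rule homeomorphic_affine_sets) (auto simp: affine_hyperplane aff_dim_hyperplane axis_eq_0_iff)
  finally obtain f :: "real^2 \<Rightarrow> real" and g where h: "homeomorphism (sphere c r - {p}) UNIV f g"
    by (auto simp: homeomorphic_def)
  then have h2: "homeomorphism Q (f`Q) f g"
    by (rule homeomorphism_of_subsets) (use assms in auto)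
  then have "Q homeomorphic f`Q" unfolding homeomorphic_def by blast
  moreover have "compact (f`Q)" "connected (f`Q)"
    using h2 assms by (auto simp: homeomorphism_def intro: compact_continuous_image connected_continuous_image)
  then obtain u v where "f`Q = {u..v}" using connected_compact_interval_1 by metis
  moreover have "f`Q \<noteq> {}" using assms by auto
  ultimately show ?thesis
    by (metis convex_imp_AR convex_real_interval(5) homeomorphic_AR_iff_AR)
qed

theorem lemmaA4:
  fixes X :: "(real^2) set" and c :: "real^2" and r :: real and \<alpha> :: "real \<Rightarrow> real^2"
  assumes "r > 0"
    and "\<not> sphere c r \<subseteq> X"
    and "essential X \<alpha>"
    and "path_image \<alpha> \<subseteq> X \<inter> ball c r"
  shows "\<not> (\<exists>\<beta>. homotopic_loops X \<alpha> \<beta> \<and> path_image \<beta> \<inter> (cball c r \<inter> X) = {})"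
proof
  assume "\<exists>\<beta>. homotopic_loops X \<alpha> \<beta> \<and> path_image \<beta> \<inter> (cball c r \<inter> X) = {}"
  then obtain \<beta> where hab: "homotopic_loops X \<alpha> \<beta>" and bdisj: "path_image \<beta> \<inter> (cball c r \<inter> X) = {}"
    by blast
  obtain p where p: "p \<in> sphere c r" "p \<notin> X" using assms(2) by blast
  have ess: "path \<alpha>" "pathfinish \<alpha> = pathstart \<alpha>" "\<not> (\<exists>a. homotopic_loops X \<alpha> (\<lambda>t. a))"
    using assms(3) unfolding essential_def by auto
  have bX: "path_image \<beta> \<subseteq> X" using hab homotopic_loops_imp_subset by blast
  have bout: "dist c (\<beta> t) > r" if "t \<in> {0..1}" for t
    using bX bdisj that by (force simp: path_image_def)
  have ain: "dist c (\<alpha> t) < r" if "t \<in> {0..1}" for t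
    using assms(4) that by (force simp: path_image_def)
  define A where "A = (\<lambda>z::complex. Arg2pi z / (2 * pi))"
  have A01: "A z \<in> {0..1}" for z
    by (auto simp: A_def Arg2pi_ge_0 Arg2pi_lt_2pi less_imp_le)
  have "homotopic_with_canon (\<lambda>h. True) (sphere 0 1) X (\<alpha> \<circ> A) (\<beta> \<circ> A)"
    unfolding A_def by (rule homotopic_loops_imp_homotopic_circlemaps [OF hab])
  then have "\<exists>h. continuous_on ({0..1::real} \<times> sphere 0 1) h \<and>
          h \<in> {0..1} \<times> sphere 0 1 \<rightarrow> X \<and>
          (\<forall>x\<in>sphere 0 1. h (0, x) = \<alpha> (A x)) \<and>
          (\<forall>x\<in>sphere 0 1. h (1, x) = \<beta> (A x))"
    by (simp add: homotopic_with)
  then obtain k where kc: "continuous_on ({0..1::real} \<times> sphere 0 1) k"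
     and kX: "k \<in> {0..1} \<times> sphere 0 1 \<rightarrow> X"
     and k0: "\<And>x. x \<in> sphere 0 1 \<Longrightarrow> k (0,x) = \<alpha> (A x)" and k1: "\<And>x. x \<in> sphere 0 1 \<Longrightarrow> k(1,x) = \<beta> (A x)"
    by blast
  have k0d: "dist c (k (0,x)) < r" if "x \<in> sphere 0 1" for x using that ain A01 k0 by simp
  have k1d: "dist c (k (1,x)) > r" if "x \<in> sphere 0 1" for x using that bout A01 k1 by simp
  define cl where "cl = (\<lambda>t::real. max 0 (min 1 t))"
  have cl01: "cl t \<in> {0..1}" for t by (auto simp: cl_def)
  define G where "G = (\<lambda>z::complex. k (cl (2 - norm z), sgn z))"
  have Gc: "continuous_on (- {0}) G"
    unfolding G_def cl_def
    by (intro continuous_on_compose2 [OF kc] continuous_intros) (auto simp: norm_sgn)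
  have GX: "G z \<in> X" if "z \<noteq> 0" for z
    using kX cl01 that by (force simp: G_def norm_sgn)
  define K where "K = {z \<in> cball 0 2 - ball 0 1. dist c (G z) = r}"
  have "closed K" unfolding K_def
    by (rule continuous_closed_preimage_constant)
       (auto intro!: continuous_on_compose2 [OF continuous_on_dist [OF continuous_on_const continuous_on_id]] continuous_on_subset [OF Gc])
  have "compact K"
  proof -
    have "bounded K" by (rule bounded_subset[OF bounded_cball[of 0 2]]) (auto simp: K_def)
    then show ?thesis using \<open>closed K\<close> compact_eq_bounded_closed by blast
  qed
  have Knorm: "1 \<le> norm z \<and> norm z \<le> 2" if "z \<in> K" for z
    using that by (auto simp: K_def)
  define S where "S = insert 0 K"
  have "closed S" using \<open>closed K\<close> by (simp add: S_def)
  define a0 :: complex where "a0 = 1/2"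
  define b0 :: complex where "b0 = 3"
  have Gin: "dist c (G z) < r" if "norm z \<ge> 2" for z
  proof -
    have "z \<noteq> 0" using that by auto
    then have "G z = k (0, sgn z)" using that by (simp add: G_def cl_def)
    then show ?thesis using k0d[of "sgn z"] \<open>z \<noteq> 0\<close> by (simp add: norm_sgn)
  qed
  have Gout: "dist c (G z) > r" if "norm z \<le> 1" "z \<noteq> 0" for z
  proof -
    have "G z = k (1, sgn z)" using that by (simp add: G_def cl_def)
    then show ?thesis using k1d[of "sgn z"] \<open>z \<noteq> 0\<close> by (simp add: norm_sgn)
  qed
  have nsep: "\<not> connected_component (- S) a0 b0"
  proof
    assume "connected_component (- S) a0 b0"
    then obtain T where T: "connected T" "T \<subseteq> - S" "a0 \<in> T" "b0 \<in> T"
      by (auto simp: connected_component_def)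
    have "continuous_on T (\<lambda>z. dist c (G z))"
      using T(2) by (auto simp: S_def intro!: continuous_on_compose2 [OF continuous_on_dist [OF continuous_on_const continuous_on_id]] continuous_on_subset [OF Gc])
    then have con: "connected ((\<lambda>z. dist c (G z)) ` T)"
      using T(1) connected_continuous_image by blast
    have "dist c (G a0) > r" by (rule Gout) (auto simp: a0_def)
    moreover have "dist c (G b0) < r" by (rule Gin) (auto simp: b0_def)
    ultimately have "r \<in> (\<lambda>z. dist c (G z)) ` T"
      using con T(3,4) unfolding connected_iff_interval
      by (metis image_eqI less_imp_le)
    then obtain y where y: "y \<in> T" "dist c (G y) = r" by auto
    then have "y \<noteq> 0" "y \<notin> K" using T(2) by (auto simp: S_def)
    show False
    proof (cases "norm y < 1")
      case True then show ?thesis using Gout[of y] y \<open>y \<noteq> 0\<close> by auto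
    next
      case False
      show ?thesis
      proof (cases "norm y > 2")
        case True then show ?thesis using Gin[of y] y by auto
      next
        case False
        then have "y \<in> K" using \<open>\<not> norm y < 1\<close> y by (auto simp: K_def)
        with \<open>y \<notin> K\<close> show ?thesis by blast
      qed
    qed
  qed
  obtain C where C: "C \<in> components S" and nsepC: "\<not> connected_component (- C) a0 b0"
    using separation_by_component_closed_pointwise [OF \<open>closed S\<close> nsep] by blast
  have Cconn: "connected C" and CS: "C \<subseteq> S" and Cne: "C \<noteq> {}"
    using in_components_connected[OF C] in_components_subset[OF C] in_components_nonempty[OF C] by auto
  have CK: "C \<subseteq> K"
  proof (rule ccontr)
    assume "\<not> C \<subseteq> K"
    then have "0 \<in> C" using CS by (auto simp: S_def)
    show False
    proof (cases "C \<subseteq> {0}")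
      case True
      then have "C = {0}" using \<open>0 \<in> C\<close> by auto
      have "connected (- {0::complex})" by (rule connected_punctured_universe) simp
      then have "connected_component (- {0}) a0 b0"
        unfolding connected_iff_connected_component by (auto simp: a0_def b0_def)
      then show False using nsepC \<open>C = {0}\<close> by simp
    next
      case False
      then obtain z where "z \<in> C" "z \<noteq> 0" by auto
      then have "norm z \<ge> 1" using CS Knorm by (auto simp: S_def)
      have "C \<inter> frontier (ball 0 (1/2)) \<noteq> {}"
      proof (rule connected_Int_frontier [OF Cconn])
        show "C \<inter> ball 0 (1/2) \<noteq> {}" using \<open>0 \<in> C\<close> by auto
        show "C - ball 0 (1/2) \<noteq> {}" using \<open>z \<in> C\<close> \<open>norm z \<ge> 1\<close> by auto
      qed
      then obtain w where "w \<in> C" "norm w = 1/2" by auto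
      then show False using CS Knorm by (force simp: S_def)
    qed
  qed
  have "closed C" using closed_components [OF \<open>closed S\<close> C] .
  have "compact C" using \<open>closed C\<close> \<open>compact K\<close> CK compact_Int_closed[of K C] by (simp add: Int_absorb1)
  have C0: "0 \<notin> C" using CK Knorm by force
  have GCc: "continuous_on C G" using C0 by (auto intro: continuous_on_subset [OF Gc])
  define Q where "Q = G ` C"
  have QX: "Q \<subseteq> X"
  proof
    fix y assume "y \<in> Q"
    then obtain z where "z \<in> C" "y = G z" by (auto simp: Q_def)
    then show "y \<in> X" using C0 GX by metis
  qed
  have Qsph: "Q \<subseteq> sphere c r - {p}"
  proof
    fix y assume "y \<in> Q"
    then obtain z where "z \<in> C" "y = G z" by (auto simp: Q_def)
    then have "dist c y = r" using CK unfolding K_def by blast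
    then show "y \<in> sphere c r - {p}" using \<open>y \<in> Q\<close> QX p(2) by auto
  qed
  have "AR Q"
  proof (rule AR_sub_punctured_circle [OF \<open>r > 0\<close> p(1) Qsph])
    show "compact Q" unfolding Q_def using GCc \<open>compact C\<close> by (rule compact_continuous_image)
    show "connected Q" unfolding Q_def using GCc Cconn by (rule connected_continuous_image)
    show "Q \<noteq> {}" using Cne by (simp add: Q_def)
  qed
  define R where "R = connected_component_set (- C) b0"
  have "open R" unfolding R_def using \<open>closed C\<close> by (simp add: open_connected_component open_Compl)
  have RC: "R \<inter> C = {}" unfolding R_def using connected_component_subset by blast
  have outR: "z \<in> R" if "norm z \<ge> 2" for z
  proof -
    have "connected (- ball (0::complex) 2)"
      by (rule connected_complement_bounded_convex) auto
    moreover have "- ball (0::complex) 2 \<subseteq> - C"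
    proof (rule subsetI)
      fix w assume "w \<in> - ball (0::complex) 2"
      then have "dist c (G w) < r" using Gin by simp
      then show "w \<in> - C" using CK unfolding K_def by auto
    qed
    moreover have "b0 \<in> - ball 0 2" by (simp add: b0_def)
    ultimately have "- ball (0::complex) 2 \<subseteq> R"
      unfolding R_def by (simp add: connected_component_maximal)
    then show ?thesis using that by auto
  qed
  have ballR: "ball 0 1 \<inter> R = {}"
  proof (rule ccontr)
    assume "ball 0 1 \<inter> R \<noteq> {}"
    then obtain z where z: "z \<in> ball 0 1" "z \<in> R" by auto
    have "ball (0::complex) 1 \<subseteq> connected_component_set (- C) a0"
      by (rule connected_component_maximal) (use CK Knorm in \<open>force simp: a0_def\<close>)+
    then have "connected_component (- C) a0 z" using z by auto
    moreover have "connected_component (- C) z b0" using z(2) unfolding R_def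
      by (simp add: connected_component_sym)
    ultimately show False using nsepC connected_component_trans by blast
  qed
  then have ballcR: "ball 0 1 \<inter> closure R = {}"
    by (simp add: open_Int_closure_eq_empty)
  have frR: "frontier R \<subseteq> C"
  proof -
    have "frontier R \<subseteq> frontier (- C)" unfolding R_def by (rule frontier_of_connected_component_subset)
    also have "... \<subseteq> C" using \<open>closed C\<close> by (simp add: frontier_complement frontier_subset_closed)
    finally show ?thesis .
  qed
  obtain e where ec: "continuous_on (cball 0 2 - R) e" and eQ: "e ` (cball 0 2 - R) \<subseteq> Q"
      and eC: "\<And>x. x \<in> C \<Longrightarrow> e x = G x"
  proof (rule AR_imp_absolute_extensor [OF \<open>AR Q\<close> GCc])
    show "G ` C \<subseteq> Q" by (simp add: Q_def)
    show "closedin (top_of_set (cball 0 2 - R)) C"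
      using \<open>closed C\<close> CK RC by (intro closed_subset) (auto simp: K_def)
  qed auto
  define F where "F = (\<lambda>z. if z \<in> R then G z else e z)"
  have Fc: "continuous_on (cball 0 2) F"
  proof -
    have eq: "cball (0::complex) 2 = (cball 0 2 \<inter> closure R) \<union> (cball 0 2 - R)"
      using closure_subset by auto
    have "continuous_on (cball 0 2 \<inter> closure R) F"
    proof (rule continuous_on_eq)
      show "continuous_on (cball 0 2 \<inter> closure R) G"
        using ballcR by (force intro: continuous_on_subset [OF Gc])
      show "G x = F x" if "x \<in> cball 0 2 \<inter> closure R" for x
      proof (cases "x \<in> R")
        case False
        then have "x \<in> frontier R" using that \<open>open R\<close> by (simp add: frontier_def interior_open)
        then show ?thesis using frR eC False by (auto simp: F_def)
      qed (simp add: F_def)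
    qed
    moreover have "continuous_on (cball 0 2 - R) F"
      by (rule continuous_on_eq [OF ec]) (auto simp: F_def)
    ultimately show ?thesis
      by (subst eq, intro continuous_on_closed_Un) (use \<open>open R\<close> in auto)
  qed
  have FX: "F ` cball 0 2 \<subseteq> X"
  proof
    fix y assume "y \<in> F ` cball 0 2"
    then obtain z where z: "z \<in> cball 0 2" "y = F z" by auto
    show "y \<in> X"
    proof (cases "z \<in> R")
      case True
      then have "z \<noteq> 0" using ballR by (metis centre_in_ball disjoint_iff zero_less_one)
      then show ?thesis using GX True z by (simp add: F_def)
    next
      case False
      then have "e z \<in> Q" using z eQ by blast
      then show ?thesis using z False QX by (auto simp: F_def)
    qed
  qed
  define g where "g = (\<lambda>w::complex. F (2 * w))"
  have gc: "continuous_on (cball 0 1) g"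
    unfolding g_def
    by (intro continuous_on_compose2 [OF Fc] continuous_intros) (auto simp: norm_mult)
  have gX: "g ` cball 0 1 \<subseteq> X"
    using FX by (force simp: g_def norm_mult)
  have gs: "\<forall>x\<in>sphere 0 1. g x = (\<alpha> \<circ> A) x"
  proof
    fix x :: complex assume x: "x \<in> sphere 0 1"
    then have n: "norm x = 1" by simp
    then have n2: "norm (2 * x) = 2" by (simp add: norm_mult)
    then have "2 * x \<in> R" using outR by simp
    moreover have "sgn (2 * x) = x" using n by (simp add: sgn_mult sgn_div_norm)
    ultimately have "g x = k (0, x)" using n2 by (simp add: g_def F_def G_def cl_def)
    then show "g x = (\<alpha> \<circ> A) x" using k0[OF x] by simp
  qed
  obtain c' where "homotopic_with_canon (\<lambda>x. True) (sphere 0 1) X (\<alpha> \<circ> A) (\<lambda>x. c')"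
    using nullhomotopic_from_sphere_extension [of 0 1 X "\<alpha> \<circ> A"] gc gX gs by blast
  then have "homotopic_loops X ((\<alpha> \<circ> A) \<circ> exp \<circ> (\<lambda>t. 2 * of_real pi * of_real t * \<i>))
                            ((\<lambda>x. c') \<circ> exp \<circ> (\<lambda>t. 2 * of_real pi * of_real t * \<i>))"
    by (rule homotopic_circlemaps_imp_homotopic_loops)
  then have hl: "homotopic_loops X ((\<alpha> \<circ> A) \<circ> exp \<circ> (\<lambda>t. 2 * of_real pi * of_real t * \<i>)) (\<lambda>t. c')"
    by (simp add: o_def)
  have "homotopic_loops X \<alpha> ((\<alpha> \<circ> A) \<circ> exp \<circ> (\<lambda>t. 2 * of_real pi * of_real t * \<i>))"
  proof (rule homotopic_loops_eq [OF ess(1) _ ess(2)])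
    show "path_image \<alpha> \<subseteq> X" using assms(4) by auto
    fix t :: real assume t: "t \<in> {0..1}"
    show "\<alpha> t = ((\<alpha> \<circ> A) \<circ> exp \<circ> (\<lambda>t. 2 * of_real pi * of_real t * \<i>)) t"
    proof (cases "t < 1")
      case True
      have "Arg2pi (exp (2 * of_real pi * of_real t * \<i>)) = 2 * pi * t"
        using t True by (subst Arg2pi_exp) auto
      then show ?thesis by (simp add: A_def)
    next
      case False
      then have "t = 1" using t by auto
      have "exp (2 * of_real pi * of_real 1 * \<i>) = (1::complex)"
        by (simp add: exp_two_pi_i)
      then have "A (exp (2 * of_real pi * of_real 1 * \<i>)) = 0"
        by (simp add: A_def Arg2pi_eq_0)
      then show ?thesis using ess(2) \<open>t = 1\<close> by (simp add: pathstart_def pathfinish_def)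
    qed
  qed
  then have "homotopic_loops X \<alpha> (\<lambda>t. c')" using hl homotopic_loops_trans by blast
  then show False using ess(3) by blast
qed
end
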